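(* For every finite simple graph $G$, the acyclic chromatic number satisfies $a(G)\le \tau(G)$.
   Context: $\tau(G)$ denotes the number of vertices in a longest path of $G$. An acyclic colouring of $G$ is a proper vertex colouring of $G$ in which no cycle of $G$ is coloured with only two colours; $a(G)$ is the minimum number of colours in an acyclic colouring of $G$. *)

theory Defs
  imports Main
begin

definition finite_simple_graph :: "'a set \<Rightarrow> ('a \<Rightarrow> 'a \<Rightarrow> bool) \<Rightarrow> bool" where
  "finite_simple_graph V E \<longleftrightarrow> finite V \<and> (\<forall>u v. E u v \<longrightarrow> u \<in> V \<and> v \<in> V)
     \<and> (\<forall>u v. E u v \<longrightarrow> E v u) \<and> (\<forall>v. \<not> E v v)"

definition is_path :: "'a set \<Rightarrow> ('a \<Rightarrow> 'a \<Rightarrow> bool) \<Rightarrow> 'a list \<Rightarrow> bool" where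
  "is_path V E p \<longleftrightarrow> p \<noteq> [] \<and> set p \<subseteq> V \<and> distinct p
     \<and> (\<forall>i. Suc i < length p \<longrightarrow> E (p ! i) (p ! Suc i))"

definition is_cycle :: "'a set \<Rightarrow> ('a \<Rightarrow> 'a \<Rightarrow> bool) \<Rightarrow> 'a list \<Rightarrow> bool" where
  "is_cycle V E c \<longleftrightarrow> length c \<ge> 3 \<and> set c \<subseteq> V \<and> distinct c
     \<and> (\<forall>i. Suc i < length c \<longrightarrow> E (c ! i) (c ! Suc i))
     \<and> E (last c) (hd c)"

text \<open>tau(G): number of vertices in a longest path (0 for the empty graph).\<close>
definition tau :: "'a set \<Rightarrow> ('a \<Rightarrow> 'a \<Rightarrow> bool) \<Rightarrow> nat" where
  "tau V E = Max (insert 0 {length p | p. is_path V E p})"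

definition proper_colouring :: "'a set \<Rightarrow> ('a \<Rightarrow> 'a \<Rightarrow> bool) \<Rightarrow> ('a \<Rightarrow> nat) \<Rightarrow> bool" where
  "proper_colouring V E col \<longleftrightarrow> (\<forall>u v. E u v \<longrightarrow> col u \<noteq> col v)"

definition acyclic_colouring :: "'a set \<Rightarrow> ('a \<Rightarrow> 'a \<Rightarrow> bool) \<Rightarrow> nat \<Rightarrow> ('a \<Rightarrow> nat) \<Rightarrow> bool" where
  "acyclic_colouring V E k col \<longleftrightarrow> col ` V \<subseteq> {0..<k} \<and> proper_colouring V E col
     \<and> (\<forall>c. is_cycle V E c \<longrightarrow> card (col ` set c) > 2)"

definition acyclic_chromatic_number :: "'a set \<Rightarrow> ('a \<Rightarrow> 'a \<Rightarrow> bool) \<Rightarrow> nat" where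
  "acyclic_chromatic_number V E = (LEAST k. \<exists>col. acyclic_colouring V E k col)"

end

theory Submission
  imports Defs
begin

definition rel :: "('a \<Rightarrow> 'a \<Rightarrow> bool) \<Rightarrow> 'a set \<Rightarrow> 'a \<Rightarrow> 'a \<Rightarrow> bool" where
  "rel E W a b \<longleftrightarrow> E a b \<and> a \<in> W \<and> b \<in> W"

lemma reach_split:
  assumes "(rel E W)\<^sup>*\<^sup>* s w" "s \<in> W"
  shows "w = r \<or> (s \<noteq> r \<and> (rel E (W-{r}))\<^sup>*\<^sup>* s w)
         \<or> (\<exists>n. E r n \<and> n \<in> W - {r} \<and> (rel E (W-{r}))\<^sup>*\<^sup>* n w)"
  using assms(1)
proof induct
  case base
  then show ?case by auto
next
  case (step y z)
  show ?case
  proof (cases "z = r")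
    case True then show ?thesis by simp
  next
    case False
    show ?thesis
    proof (cases "y = r")
      case True
      then show ?thesis using step(2) False unfolding rel_def by auto
    next
      case yr: False
      have yz: "rel E (W-{r}) y z" using step(2) False yr unfolding rel_def by auto
      from step(3) yr show ?thesis
        by (meson rtranclp.rtrancl_into_rtrancl yz)
    qed
  qed
qed

lemma reach_closed:
  assumes "(rel E X)\<^sup>*\<^sup>* a b" "a \<in> Y" "Y \<subseteq> X"
    "\<And>u v. u \<in> Y \<Longrightarrow> v \<in> X \<Longrightarrow> E u v \<Longrightarrow> v \<in> Y"
  shows "(rel E Y)\<^sup>*\<^sup>* a b \<and> b \<in> Y"
  using assms(1)
proof induct
  case base then show ?case using assms by auto
next
  case (step y z)
  then have "rel E Y y z" using assms(4) unfolding rel_def by blast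
  then show ?case using step by (meson rtranclp.rtrancl_into_rtrancl rel_def)
qed

lemma path_cons:
  assumes "is_path V E p" "r \<in> V" "r \<notin> set p" "E r (hd p)"
  shows "is_path V E (r # p)"
  unfolding is_path_def
proof (intro conjI allI impI)
  show "r # p \<noteq> []" by simp
  show "set (r # p) \<subseteq> V" using assms unfolding is_path_def by auto
  show "distinct (r # p)" using assms unfolding is_path_def by auto
  fix i assume i: "Suc i < length (r # p)"
  show "E ((r # p) ! i) ((r # p) ! Suc i)"
  proof (cases i)
    case 0
    then show ?thesis using assms(4) assms(1) unfolding is_path_def by (simp add: hd_conv_nth)
  next
    case (Suc j)
    then show ?thesis using i assms(1) unfolding is_path_def by simp
  qed
qed

definition good :: "'a set \<Rightarrow> ('a \<Rightarrow> 'a \<Rightarrow> bool) \<Rightarrow> 'a set \<Rightarrow> 'a set \<Rightarrow> ('a \<Rightarrow> nat) \<Rightarrow> bool" where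
  "good V E W S col \<longleftrightarrow> (\<forall>u\<in>W. \<forall>v\<in>W. E u v \<longrightarrow> col u \<noteq> col v)
    \<and> (\<forall>u\<in>W. \<forall>a\<in>W. \<forall>b\<in>W. E u a \<longrightarrow> E u b \<longrightarrow> col a = col b \<longrightarrow> col a < col u \<longrightarrow> a = b)
    \<and> (\<forall>v\<in>W. \<exists>p. is_path V E p \<and> set p \<subseteq> W \<and> hd p \<in> S \<and> col v < length p)"

lemma main:
  assumes G: "finite_simple_graph V E"
  shows "finite W \<Longrightarrow> W \<subseteq> V \<Longrightarrow> (\<forall>w\<in>W. \<exists>s\<in>S. s \<in> W \<and> (rel E W)\<^sup>*\<^sup>* s w)
         \<Longrightarrow> \<exists>col. good V E W S col"
proof (induction "card W" arbitrary: W S rule: less_induct)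
  case less
  have sym: "\<And>u v. E u v \<Longrightarrow> E v u" and inV: "\<And>u v. E u v \<Longrightarrow> u \<in> V \<and> v \<in> V"
    and irr: "\<And>v. \<not> E v v"
    using G unfolding finite_simple_graph_def by blast+
  show ?case
  proof (cases "W = {}")
    case True
    then show ?thesis unfolding good_def by auto
  next
    case False
    then obtain w where "w \<in> W" by auto
    with less.prems(3) obtain r where r: "r \<in> S" "r \<in> W" by auto
    define A where "A = {w \<in> W-{r}. \<exists>n. E r n \<and> n \<in> W-{r} \<and> (rel E (W-{r}))\<^sup>*\<^sup>* n w}"
    define B where "B = W - {r} - A"
    have AW: "A \<subseteq> W - {r}" and BW: "B \<subseteq> W - {r}" unfolding A_def B_def by auto
    have Acl: "\<And>u v. u \<in> A \<Longrightarrow> v \<in> W-{r} \<Longrightarrow> E u v \<Longrightarrow> v \<in> A"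
    proof -
      fix u v assume "u \<in> A" "v \<in> W-{r}" "E u v"
      then obtain n where n: "E r n" "n \<in> W-{r}" "(rel E (W-{r}))\<^sup>*\<^sup>* n u" "u \<in> W-{r}"
        unfolding A_def by auto
      have "rel E (W-{r}) u v" using n(4) \<open>v \<in> W-{r}\<close> \<open>E u v\<close> unfolding rel_def by auto
      then have "(rel E (W-{r}))\<^sup>*\<^sup>* n v" using n(3) by (rule rtranclp.rtrancl_into_rtrancl[rotated])
      then show "v \<in> A" unfolding A_def
        using \<open>v \<in> W-{r}\<close> n(1,2) by blast
    qed
    have Anb: "\<And>v. v \<in> W-{r} \<Longrightarrow> E r v \<Longrightarrow> v \<in> A"
      unfolding A_def by auto
    have Bcl: "\<And>u v. u \<in> B \<Longrightarrow> v \<in> W-{r} \<Longrightarrow> E u v \<Longrightarrow> v \<in> B"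
    proof -
      fix u v assume "u \<in> B" "v \<in> W-{r}" "E u v"
      show "v \<in> B"
      proof (rule ccontr)
        assume "v \<notin> B"
        then have "v \<in> A" using \<open>v \<in> W-{r}\<close> unfolding B_def by auto
        moreover have "u \<in> W-{r}" "u \<notin> A" using \<open>u \<in> B\<close> unfolding B_def by auto
        ultimately show False using Acl[of v u] sym[OF \<open>E u v\<close>] by blast
      qed
    qed
    have condA: "\<forall>w\<in>A. \<exists>s\<in>{n. E r n}. s \<in> A \<and> (rel E A)\<^sup>*\<^sup>* s w"
    proof
      fix w assume "w \<in> A"
      then obtain n where n: "E r n" "n \<in> W-{r}" "(rel E (W-{r}))\<^sup>*\<^sup>* n w"
        unfolding A_def by auto
      have "n \<in> A" using Anb n by auto
      then have "(rel E A)\<^sup>*\<^sup>* n w" using reach_closed[of E "W-{r}" n w A] n(3) AW Acl by blast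
      with n \<open>n \<in> A\<close> show "\<exists>s\<in>{n. E r n}. s \<in> A \<and> (rel E A)\<^sup>*\<^sup>* s w" by auto
    qed
    have condB: "\<forall>w\<in>B. \<exists>s\<in>S. s \<in> B \<and> (rel E B)\<^sup>*\<^sup>* s w"
    proof
      fix w assume wB: "w \<in> B"
      then have "w \<in> W" unfolding B_def by auto
      with less.prems(3) obtain s where s: "s \<in> S" "s \<in> W" "(rel E W)\<^sup>*\<^sup>* s w" by auto
      have wr: "w \<noteq> r" "w \<notin> A" "w \<in> W-{r}" using wB unfolding B_def by auto
      have no3: "\<not> (\<exists>n. E r n \<and> n \<in> W - {r} \<and> (rel E (W-{r}))\<^sup>*\<^sup>* n w)"
        using wr unfolding A_def by blast
      from reach_split[OF s(3) s(2), of r] wr(1) no3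
      have sr: "s \<noteq> r" and rs: "(rel E (W-{r}))\<^sup>*\<^sup>* s w" by blast+
      have "s \<notin> A"
      proof
        assume "s \<in> A"
        then have "w \<in> A" using reach_closed[of E "W-{r}" s w A] rs AW Acl by blast
        with wB show False unfolding B_def by auto
      qed
      then have sB: "s \<in> B" using s sr unfolding B_def by auto
      then have "(rel E B)\<^sup>*\<^sup>* s w" using reach_closed[of E "W-{r}" s w B] rs BW Bcl by blast
      with s sB show "\<exists>s\<in>S. s \<in> B \<and> (rel E B)\<^sup>*\<^sup>* s w" by auto
    qed
    have finW: "finite W" by (rule less.prems(1))
    have cWr: "card (W-{r}) < card W" by (rule card_Diff1_less[OF finW r(2)])
    have cA: "card A < card W" using AW finW cWr
      by (meson card_mono finite_Diff le_less_trans)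
    have cB: "card B < card W" using BW finW cWr
      by (meson card_mono finite_Diff le_less_trans)
    have finA: "finite A" and finB: "finite B" using AW BW finW
      by (meson finite_Diff finite_subset)+
    have AV: "A \<subseteq> V" and BV: "B \<subseteq> V" using AW BW less.prems(2) by auto
    obtain colA where gA: "good V E A {n. E r n} colA"
      using less.hyps[OF cA finA AV condA] by blast
    obtain colB where gB: "good V E B S colB"
      using less.hyps[OF cB finB BV condB] by blast
    define col where "col v = (if v = r then 0 else if v \<in> A then Suc (colA v) else colB v)" for v
    have Wsplit: "W = insert r (A \<union> B)" using r(2) unfolding B_def A_def by auto
    have rAB: "r \<notin> A" "r \<notin> B" "A \<inter> B = {}" unfolding A_def B_def by auto
    have nrB: "\<And>b. b \<in> B \<Longrightarrow> \<not> E r b \<and> \<not> E b r"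
      using Anb sym BW rAB by blast
    have nAB: "\<And>a b. a \<in> A \<Longrightarrow> b \<in> B \<Longrightarrow> \<not> E a b \<and> \<not> E b a"
      using Acl sym BW rAB by blast
    have colr: "col r = 0" unfolding col_def by simp
    have colAv: "\<And>v. v \<in> A \<Longrightarrow> col v = Suc (colA v)" unfolding col_def using rAB by auto
    have colBv: "\<And>v. v \<in> B \<Longrightarrow> col v = colB v" unfolding col_def using rAB by auto
    have gA1: "\<And>u v. u \<in> A \<Longrightarrow> v \<in> A \<Longrightarrow> E u v \<Longrightarrow> colA u \<noteq> colA v"
      and gA2: "\<And>u a b. u \<in> A \<Longrightarrow> a \<in> A \<Longrightarrow> b \<in> A \<Longrightarrow> E u a \<Longrightarrow> E u b \<Longrightarrow> colA a = colA b \<Longrightarrow> colA a < colA u \<Longrightarrow> a = b"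
      and gA3: "\<And>v. v \<in> A \<Longrightarrow> \<exists>p. is_path V E p \<and> set p \<subseteq> A \<and> hd p \<in> {n. E r n} \<and> colA v < length p"
      using gA unfolding good_def by blast+
    have gB1: "\<And>u v. u \<in> B \<Longrightarrow> v \<in> B \<Longrightarrow> E u v \<Longrightarrow> colB u \<noteq> colB v"
      and gB2: "\<And>u a b. u \<in> B \<Longrightarrow> a \<in> B \<Longrightarrow> b \<in> B \<Longrightarrow> E u a \<Longrightarrow> E u b \<Longrightarrow> colB a = colB b \<Longrightarrow> colB a < colB u \<Longrightarrow> a = b"
      and gB3: "\<And>v. v \<in> B \<Longrightarrow> \<exists>p. is_path V E p \<and> set p \<subseteq> B \<and> hd p \<in> S \<and> colB v < length p"
      using gB unfolding good_def by blast+
    have P1: "\<forall>u\<in>W. \<forall>v\<in>W. E u v \<longrightarrow> col u \<noteq> col v"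
    proof (intro ballI impI)
      fix u v assume u: "u \<in> W" and v: "v \<in> W" and e: "E u v"
      show "col u \<noteq> col v"
      proof -
        consider "u = r" | "u \<in> A" | "u \<in> B" using u Wsplit by blast
        then show ?thesis
        proof cases
          case 1
          then have "v \<noteq> r" "v \<notin> B" using e irr nrB by auto
          then have "v \<in> A" using v Wsplit by blast
          then show ?thesis using 1 colr colAv by simp
        next
          case 2
          then have "v \<notin> B" using e nAB by blast
          then consider "v = r" | "v \<in> A" using v Wsplit by blast
          then show ?thesis
          proof cases
            case 1 then show ?thesis using 2 colr colAv by simp
          next
            case 3: 2 then show ?thesis using 2 colAv gA1 e by simp
          qed
        next
          case 3
          then have "v \<in> B" using e nAB nrB v Wsplit by blast
          then show ?thesis using 3 colBv gB1 e by simp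
        qed
      qed
    qed
    have P2: "\<forall>u\<in>W. \<forall>a\<in>W. \<forall>b\<in>W. E u a \<longrightarrow> E u b \<longrightarrow> col a = col b \<longrightarrow> col a < col u \<longrightarrow> a = b"
    proof (intro ballI impI)
      fix u a b assume u: "u \<in> W" and a: "a \<in> W" and b: "b \<in> W" and ea: "E u a" and eb: "E u b"
        and eq: "col a = col b" and lt: "col a < col u"
      consider "u = r" | "u \<in> A" | "u \<in> B" using u Wsplit by blast
      then show "a = b"
      proof cases
        case 1 then show ?thesis using lt colr by simp
      next
        case 2
        then have "a \<notin> B" "b \<notin> B" using ea eb nAB by blast+
        then have aa: "a = r \<or> a \<in> A" and bb: "b = r \<or> b \<in> A" using a b Wsplit by blast+
        show ?thesis
        proof (cases "a = r")
          case True
          then have "col b = 0" using eq colr by simp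
          then have "b = r" using bb colAv by auto
          then show ?thesis using True by simp
        next
          case False
          then have aA: "a \<in> A" using aa by simp
          then have "b \<noteq> r" using eq colAv colr by auto
          then have bA: "b \<in> A" using bb by simp
          show ?thesis using gA2[OF 2 aA bA ea eb] eq lt colAv aA bA 2 by simp
        qed
      next
        case 3
        then have aB: "a \<in> B" and bB: "b \<in> B" using ea eb nAB nrB a b Wsplit by blast+
        show ?thesis using gB2[OF 3 aB bB ea eb] eq lt colBv aB bB 3 by simp
      qed
    qed
    have rV: "r \<in> V" using r(2) less.prems(2) by auto
    have P3: "\<forall>v\<in>W. \<exists>p. is_path V E p \<and> set p \<subseteq> W \<and> hd p \<in> S \<and> col v < length p"
    proof
      fix v assume v: "v \<in> W"
      consider "v = r" | "v \<in> A" | "v \<in> B" using v Wsplit by blast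
      then show "\<exists>p. is_path V E p \<and> set p \<subseteq> W \<and> hd p \<in> S \<and> col v < length p"
      proof cases
        case 1
        have "is_path V E [r]" using rV unfolding is_path_def by simp
        then show ?thesis using 1 colr r by (intro exI[of _ "[r]"]) auto
      next
        case 2
        then obtain p where p: "is_path V E p" "set p \<subseteq> A" "E r (hd p)" "colA v < length p"
          using gA3 by blast
        have "r \<notin> set p" using p(2) rAB by blast
        then have "is_path V E (r # p)" using path_cons[OF p(1) rV _ p(3)] by blast
        moreover have "set (r # p) \<subseteq> W" using p(2) AW r(2) by auto
        ultimately show ?thesis using r(1) p(4) colAv[OF 2] by (intro exI[of _ "r # p"]) auto
      next
        case 3
        then obtain p where p: "is_path V E p" "set p \<subseteq> B" "hd p \<in> S" "colB v < length p"
          using gB3 by blast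
        then show ?thesis using BW colBv[OF 3] by (intro exI[of _ p]) auto
      qed
    qed
    show ?thesis using P1 P2 P3 unfolding good_def by blast
  qed
qed

lemma tau_ge:
  assumes G: "finite_simple_graph V E" and p: "is_path V E p"
  shows "length p \<le> tau V E"
proof -
  have fin: "finite V" using G unfolding finite_simple_graph_def by blast
  have "{length p | p. is_path V E p} \<subseteq> {0..card V}"
  proof
    fix x assume "x \<in> {length p | p. is_path V E p}"
    then obtain q where q: "x = length q" "is_path V E q" by blast
    have "length q = card (set q)" using q(2) unfolding is_path_def by (simp add: distinct_card)
    also have "\<dots> \<le> card V" using q(2) fin unfolding is_path_def by (simp add: card_mono)
    finally show "x \<in> {0..card V}" using q(1) by simp
  qed
  then have "finite (insert 0 {length p | p. is_path V E p})"
    using finite_subset by blast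
  then show ?thesis unfolding tau_def using p by (intro Max_ge) auto
qed

lemma cycle_adj:
  assumes c: "is_cycle V E c" and j: "j < length c"
  shows "E (c ! j) (c ! (if j = length c - 1 then 0 else Suc j))"
proof (cases "j = length c - 1")
  case True
  have ne: "c \<noteq> []" using c unfolding is_cycle_def by auto
  have "E (last c) (hd c)" using c unfolding is_cycle_def by blast
  then show ?thesis using True ne by (simp add: last_conv_nth hd_conv_nth)
next
  case False
  then have "Suc j < length c" using j by simp
  then show ?thesis using c False unfolding is_cycle_def by auto
qed

theorem corollary3p1:
  fixes V :: "'a set" and E :: "'a \<Rightarrow> 'a \<Rightarrow> bool"
  assumes "finite_simple_graph V E"
  shows "acyclic_chromatic_number V E \<le> tau V E"
proof -
  note G = assms
  have fin: "finite V" and sym: "\<And>u v. E u v \<Longrightarrow> E v u" and inV: "\<And>u v. E u v \<Longrightarrow> u \<in> V \<and> v \<in> V"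
    using G unfolding finite_simple_graph_def by blast+
  have "\<forall>w\<in>V. \<exists>s\<in>V. s \<in> V \<and> (rel E V)\<^sup>*\<^sup>* s w" by blast
  then obtain col where g: "good V E V V col" using main[OF G fin subset_refl] by blast
  have g1: "\<And>u v. u \<in> V \<Longrightarrow> v \<in> V \<Longrightarrow> E u v \<Longrightarrow> col u \<noteq> col v"
    and g2: "\<And>u a b. u \<in> V \<Longrightarrow> a \<in> V \<Longrightarrow> b \<in> V \<Longrightarrow> E u a \<Longrightarrow> E u b \<Longrightarrow> col a = col b \<Longrightarrow> col a < col u \<Longrightarrow> a = b"
    and g3: "\<And>v. v \<in> V \<Longrightarrow> \<exists>p. is_path V E p \<and> set p \<subseteq> V \<and> hd p \<in> V \<and> col v < length p"
    using g unfolding good_def by blast+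
  have range: "col ` V \<subseteq> {0..<tau V E}"
  proof
    fix x assume "x \<in> col ` V"
    then obtain v where v: "v \<in> V" "x = col v" by blast
    then obtain p where "is_path V E p" "col v < length p" using g3 by blast
    then show "x \<in> {0..<tau V E}" using tau_ge[OF G] v by fastforce
  qed
  have proper: "proper_colouring V E col"
    unfolding proper_colouring_def using g1 inV by blast
  have acyc: "card (col ` set c) > 2" if c: "is_cycle V E c" for c
  proof -
    define n where "n = length c"
    have n3: "n \<ge> 3" and cV: "set c \<subseteq> V" and dist: "distinct c"
      using c unfolding is_cycle_def n_def by auto
    have "col ` set c \<noteq> {}" using n3 n_def by auto
    then have "Max (col ` set c) \<in> col ` set c" by (intro Max_in) auto
    then obtain x where x: "x \<in> set c" "col x = Max (col ` set c)" by auto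
    then obtain i where i: "i < n" "c ! i = x" using n_def by (auto simp: in_set_conv_nth)
    have maxc: "\<And>j. j < n \<Longrightarrow> col (c ! j) \<le> col (c ! i)"
      using i x n_def by (simp add: nth_mem)
    define nx where "nx = (if i = n - 1 then 0 else Suc i)"
    define pv where "pv = (if i = 0 then n - 1 else i - 1)"
    have nxl: "nx < n" and pvl: "pv < n" using i n3 unfolding nx_def pv_def by auto
    have d1: "nx \<noteq> i" "pv \<noteq> i" "nx \<noteq> pv" using i n3 unfolding nx_def pv_def by auto
    have e1: "E (c ! i) (c ! nx)" using cycle_adj[OF c, of i] i n_def nx_def by simp
    have "pv = n - 1 \<longleftrightarrow> i = 0" using i n3 unfolding pv_def by auto
    moreover have "(if pv = n - 1 then 0 else Suc pv) = i" using i n3 unfolding pv_def by auto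
    ultimately have "E (c ! pv) (c ! i)" using cycle_adj[OF c pvl[unfolded n_def]] n_def by simp
    then have e2: "E (c ! i) (c ! pv)" by (rule sym)
    have inV': "\<And>j. j < n \<Longrightarrow> c ! j \<in> V" using cV n_def by (auto simp: nth_mem subsetD)
    have neq: "\<And>j k. j < n \<Longrightarrow> k < n \<Longrightarrow> j \<noteq> k \<Longrightarrow> c ! j \<noteq> c ! k"
      using dist n_def by (simp add: nth_eq_iff_index_eq)
    have c1: "col (c ! nx) < col (c ! i)" using g1[OF inV'[OF i(1)] inV'[OF nxl] e1] maxc[OF nxl] by simp
    have c2: "col (c ! pv) < col (c ! i)" using g1[OF inV'[OF i(1)] inV'[OF pvl] e2] maxc[OF pvl] by simp
    have c3: "col (c ! nx) \<noteq> col (c ! pv)"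
    proof
      assume eq: "col (c ! nx) = col (c ! pv)"
      have "c ! nx = c ! pv" using g2[OF inV'[OF i(1)] inV'[OF nxl] inV'[OF pvl] e1 e2 eq c1] .
      with neq[OF nxl pvl d1(3)] show False by simp
    qed
    have sub: "{col (c ! i), col (c ! nx), col (c ! pv)} \<subseteq> col ` set c"
      using i nxl pvl n_def by (auto simp: nth_mem)
    have "card {col (c ! i), col (c ! nx), col (c ! pv)} = 3" using c1 c2 c3 by auto
    moreover have "card {col (c ! i), col (c ! nx), col (c ! pv)} \<le> card (col ` set c)"
      by (rule card_mono[OF _ sub]) simp
    ultimately show ?thesis by simp
  qed
  have "acyclic_colouring V E (tau V E) col"
    unfolding acyclic_colouring_def using range proper acyc by blast
  then show ?thesis unfolding acyclic_chromatic_number_def by (intro Least_le) blast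
qed

end
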